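(* Let $m,n\in\mathbb{N}$. For $1\le\ell\le m$ let $0<q_{\ell}<1$ and $K_{\ell}=\frac{\pi}{2}\left(\sum_{r\in\mathbb{Z}}q_{\ell}^{r^{2}}\right)^{2}$, and let $v_{j,\ell}\in\mathbb{C}$ ($1\le j\le n$) satisfy $q_{\ell}e^{4\pi|\Im(v_{j,\ell})|}<1$ for all $1\le j\le n$, $1\le \ell\le m$. Then the $n\times n$ matrix \[ \left(\prod_{\ell=1}^{m}\mathrm{dn}\left(2K_{\ell}\left(v_{j,\ell}-\overline{v_{k,\ell}}\right)\right)\right)_{j,k=1}^{n} \] is positive semidefinite, where $\mathrm{dn}$ is computed with nome $q_\ell$ in the $\ell$-th factor.
   Context: For $0<q<1$ and $K=\frac{\pi}{2}\theta_3^2$ with $\theta_3=\sum_{r\in\mathbb{Z}}q^{r^2}$, the Jacobi elliptic function is given by $\mathrm{dn}(2Kv)=\frac{\pi}{K}\sum_{n\in\mathbb{Z}}\frac{q^{n}}{1+q^{2n}}e^{2n\pi vi}$ for $v\in\mathbb{C}$ with $qe^{2\pi|\Im(v)|}<1$. A complex matrix $A=(a_{j,k})$ is positive semidefinite if $\sum_{j,k}a_{j,k}z_j\overline{z_k}\ge0$ for all complex $z_j$. *)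

theory Defs
  imports "HOL-Analysis.Analysis" "HOL-Library.Complex_Order"
begin

definition theta3 :: "real \<Rightarrow> real" where
  "theta3 q = (\<Sum>\<^sub>\<infinity>r::int. q ^ nat (r^2))"

definition jacobiK :: "real \<Rightarrow> real" where
  "jacobiK q = pi / 2 * (theta3 q)^2"

text \<open>Jacobi dn with nome q, via the Fourier series in the paper:
  dn(2Kv) = (pi/K) * sum_{n in Z} q^n/(1+q^(2n)) e^(2 n pi v i), i.e. with v = u/(2K).\<close>
definition dn :: "real \<Rightarrow> complex \<Rightarrow> complex" where
  "dn q u = complex_of_real (pi / jacobiK q) *
     (\<Sum>\<^sub>\<infinity>n::int. complex_of_real (q powi n / (1 + q powi (2*n))) *
        exp (2 * of_int n * complex_of_real pi * (u / complex_of_real (2 * jacobiK q)) * \<i>))"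

definition psd_matrix :: "nat \<Rightarrow> (nat \<Rightarrow> nat \<Rightarrow> complex) \<Rightarrow> bool" where
  "psd_matrix n A \<longleftrightarrow>
     (\<forall>z::nat \<Rightarrow> complex. 0 \<le> (\<Sum>j\<in>{1..n}. \<Sum>k\<in>{1..n}. A j k * z j * cnj (z k)))"

end

theory Submission imports Defs begin

lemma div1p_le: fixes a b :: real assumes "0 \<le> a" "0 \<le> b" shows "a / (1 + b) \<le> a"
  using divide_left_mono[of 1 "1+b" a] assms by simp

lemma ratio_le:
  fixes q :: real and n :: int
  assumes "0 < q" "q < 1"
  shows "q powi n / (1 + q powi (2*n)) \<le> q ^ nat \<bar>n\<bar>"
proof (cases "n \<ge> 0")
  case True
  then obtain k where k: "n = int k" by (metis nonneg_int_cases)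
  have "q powi n = q ^ k" using k by (simp add: power_int_def)
  moreover have "q powi (2*n) = q ^ (2*k)" using k by (simp add: power_int_def nat_mult_distrib)
  moreover have "q^k / (1 + q^(2*k)) \<le> q^k"
    using assms by (intro div1p_le) auto
  ultimately show ?thesis using k by simp
next
  case False
  then obtain k where k: "n = - int k" by (metis linorder_le_cases nonpos_int_cases)
  have "q powi n = 1 / q ^ k" using k by (simp add: power_int_def power_int_minus divide_inverse power_inverse)
  moreover have "q powi (2*n) = 1/ q ^ (2*k)" using k by (simp add: power_int_def power_int_minus divide_inverse nat_mult_distrib power_inverse)
  moreover have "(1/q^k) / (1 + 1/q^(2*k)) = q^k / (q^(2*k) + 1)"
  proof -
    have a: "q^k > 0" using assms by simp
    have "\<And>a::real. a > 0 \<Longrightarrow> (1/a)/(1+1/a^2) = a/(a^2+1)"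
      by (simp add: field_simps power2_eq_square)
    from this[OF a] show ?thesis by (simp add: power_mult[symmetric] mult.commute)
  qed
  moreover have "q^k / (q^(2*k)+1) \<le> q^k"
    using assms div1p_le[of "q^k" "q^(2*k)"] by (simp add: add.commute)
  ultimately show ?thesis using k by simp
qed

lemma term_bound:
  fixes q :: real and n :: int and x :: complex
  assumes "0 < q" "q < 1"
  shows "norm (complex_of_real (q powi n / (1 + q powi (2*n))) * exp (2 * of_int n * complex_of_real pi * x * \<i>))
     \<le> (q * exp (2*pi*\<bar>Im x\<bar>)) ^ nat \<bar>n\<bar>"
proof -
  have r0: "0 \<le> q powi n / (1 + q powi (2*n))" using assms by simp
  have e: "norm (exp (2 * of_int n * complex_of_real pi * x * \<i>)) = exp (- 2 * of_int n * pi * Im x)"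
    by (simp add: norm_exp_eq_Re)
  have "- 2 * of_int n * pi * Im x \<le> real (nat \<bar>n\<bar>) * (2*pi*\<bar>Im x\<bar>)"
  proof -
    have "- 2 * of_int n * pi * Im x \<le> \<bar>- 2 * of_int n * pi * Im x\<bar>" by simp
    also have "\<dots> = real (nat \<bar>n\<bar>) * (2*pi*\<bar>Im x\<bar>)" by (simp add: abs_mult)
    finally show ?thesis .
  qed
  hence "exp (- 2 * of_int n * pi * Im x) \<le> exp (2*pi*\<bar>Im x\<bar>) ^ nat \<bar>n\<bar>"
    by (metis exp_le_cancel_iff exp_of_nat_mult)
  moreover have "q powi n / (1 + q powi (2*n)) \<le> q ^ nat \<bar>n\<bar>" using ratio_le assms by blast
  ultimately have "(q powi n / (1 + q powi (2*n))) * exp (- 2 * of_int n * pi * Im x) \<le> q ^ nat \<bar>n\<bar> * exp (2*pi*\<bar>Im x\<bar>) ^ nat \<bar>n\<bar>"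
    using r0 by (intro mult_mono) auto
  thus ?thesis unfolding norm_mult norm_of_real e using r0 by (simp only: abs_of_nonneg power_mult_distrib)
qed

lemma geom_int_summable:
  fixes r :: real assumes "0 \<le> r" "r < 1"
  shows "(\<lambda>n::int. r ^ nat \<bar>n\<bar>) summable_on UNIV"
proof -
  have s: "(\<lambda>n::nat. r ^ n) summable_on UNIV"
    using assms by (intro summable_nonneg_imp_summable_on) auto
  have 1: "(\<lambda>n::int. r ^ nat \<bar>n\<bar>) summable_on range int"
    by (subst summable_on_reindex) (use s in \<open>auto simp: o_def inj_on_def\<close>)
  have 2: "(\<lambda>n::int. r ^ nat \<bar>n\<bar>) summable_on range (\<lambda>n. - int n)"
    by (subst summable_on_reindex) (use s in \<open>auto simp: o_def inj_on_def\<close>)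
  have "UNIV = range int \<union> range (\<lambda>n. - int n)"
  proof (intro set_eqI iffI)
    fix n :: int
    show "n \<in> range int \<union> range (\<lambda>n. - int n)"
    proof (cases "n \<ge> 0")
      case True thus ?thesis by (intro UnI1 image_eqI[where x="nat n"]) auto
    next
      case False thus ?thesis by (intro UnI2 image_eqI[where x="nat (-n)"]) auto
    qed
  qed auto
  thus ?thesis using summable_on_union[OF 1 2] by simp
qed

definition gram :: "nat \<Rightarrow> (nat \<Rightarrow> nat \<Rightarrow> complex) \<Rightarrow> bool" where
  "gram n A \<longleftrightarrow> (\<exists>I::nat set. \<exists>g. finite I \<and>
      (\<forall>j\<in>{1..n}. \<forall>k\<in>{1..n}. A j k = (\<Sum>i\<in>I. g i j * cnj (g i k))))"

lemma gram_intro: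
  fixes S :: "'a::countable set" and h :: "'a \<Rightarrow> nat \<Rightarrow> complex"
  assumes "finite S" "\<And>j k. j\<in>{1..n} \<Longrightarrow> k\<in>{1..n} \<Longrightarrow> A j k = (\<Sum>s\<in>S. h s j * cnj (h s k))"
  shows "gram n A"
  unfolding gram_def
proof (intro exI conjI ballI)
  show "finite (to_nat ` S)" using assms by simp
  fix j k assume "j\<in>{1..n}" "k\<in>{1..n}"
  then show "A j k = (\<Sum>i\<in>to_nat ` S. (\<lambda>i. h (from_nat i)) i j * cnj ((\<lambda>i. h (from_nat i)) i k))"
    using assms by (subst sum.reindex) (auto simp: inj_on_def)
qed

lemma gram_psd:
  assumes "gram n A" shows "psd_matrix n A"
proof -
  from assms obtain I :: "nat set" and g where I: "finite I"
    and A: "\<And>j k. j\<in>{1..n} \<Longrightarrow> k\<in>{1..n} \<Longrightarrow> A j k = (\<Sum>i\<in>I. g i j * cnj (g i k))"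
    unfolding gram_def by blast
  show ?thesis unfolding psd_matrix_def
  proof
    fix z :: "nat \<Rightarrow> complex"
    have "(\<Sum>j\<in>{1..n}. \<Sum>k\<in>{1..n}. A j k * z j * cnj (z k))
        = (\<Sum>j\<in>{1..n}. \<Sum>k\<in>{1..n}. \<Sum>i\<in>I. (g i j * z j) * cnj (g i k * z k))"
      by (intro sum.cong refl) (simp add: A sum_distrib_right sum_distrib_left mult_ac)
    also have "\<dots> = (\<Sum>i\<in>I. (\<Sum>j\<in>{1..n}. g i j * z j) * cnj (\<Sum>k\<in>{1..n}. g i k * z k))"
      by (simp add: sum_product cnj_sum sum.swap[of _ I])
    also have "\<dots> = (\<Sum>i\<in>I. complex_of_real ((cmod (\<Sum>j\<in>{1..n}. g i j * z j))^2))"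
      by (intro sum.cong refl) (rule complex_norm_square[symmetric])
    also have "\<dots> \<ge> 0" by (intro sum_nonneg) (simp only: less_eq_complex_def Re_complex_of_real Im_complex_of_real, simp)
    finally show "0 \<le> (\<Sum>j\<in>{1..n}. \<Sum>k\<in>{1..n}. A j k * z j * cnj (z k))" .
  qed
qed

lemma gram_mult:
  assumes "gram n A" "gram n B" shows "gram n (\<lambda>j k. A j k * B j k)"
proof -
  from assms(1) obtain I :: "nat set" and g where I: "finite I"
    and A: "\<And>j k. j\<in>{1..n} \<Longrightarrow> k\<in>{1..n} \<Longrightarrow> A j k = (\<Sum>i\<in>I. g i j * cnj (g i k))"
    unfolding gram_def by blast
  from assms(2) obtain J :: "nat set" and h where J: "finite J"
    and B: "\<And>j k. j\<in>{1..n} \<Longrightarrow> k\<in>{1..n} \<Longrightarrow> B j k = (\<Sum>i\<in>J. h i j * cnj (h i k))"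
    unfolding gram_def by blast
  show ?thesis
  proof (rule gram_intro[where S="I \<times> J" and h="\<lambda>p j. g (fst p) j * h (snd p) j"])
    show "finite (I \<times> J)" using I J by simp
    fix j k assume jk: "j\<in>{1..n}" "k\<in>{1..n}"
    show "A j k * B j k = (\<Sum>p\<in>I \<times> J. g (fst p) j * h (snd p) j * cnj (g (fst p) k * h (snd p) k))"
      unfolding A[OF jk] B[OF jk] sum_product sum.cartesian_product
      by (intro sum.cong refl) (auto simp: mult_ac)
  qed
qed

lemma gram_one: "gram n (\<lambda>j k. 1)"
  by (rule gram_intro[where S="{0::nat}" and h="\<lambda>_ _. 1"]) auto

lemma gram_prod:
  assumes "finite L" "\<And>l. l \<in> L \<Longrightarrow> gram n (A l)"
  shows "gram n (\<lambda>j k. \<Prod>l\<in>L. A l j k)"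
  using assms
proof (induction L rule: finite_induct)
  case empty thus ?case by (simp add: gram_one)
next
  case (insert x F)
  have "gram n (\<lambda>j k. A x j k * (\<Prod>l\<in>F. A l j k))"
    using insert by (intro gram_mult) auto
  thus ?case using insert by simp
qed

lemma psd_limit:
  assumes "\<And>N. psd_matrix n (A N)"
    "\<And>j k. j\<in>{1..n} \<Longrightarrow> k\<in>{1..n} \<Longrightarrow> (\<lambda>N. A N j k) \<longlonglongrightarrow> B j k"
  shows "psd_matrix n B"
  unfolding psd_matrix_def
proof
  fix z :: "nat \<Rightarrow> complex"
  let ?Q = "\<lambda>N. (\<Sum>j\<in>{1..n}. \<Sum>k\<in>{1..n}. A N j k * z j * cnj (z k))"
  let ?L = "(\<Sum>j\<in>{1..n}. \<Sum>k\<in>{1..n}. B j k * z j * cnj (z k))"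
  have t: "?Q \<longlonglongrightarrow> ?L"
    by (intro tendsto_sum tendsto_mult tendsto_const assms(2)) auto
  have nn: "\<And>N. 0 \<le> ?Q N" using assms(1) unfolding psd_matrix_def by blast
  have "(\<lambda>N. Re (?Q N)) \<longlonglongrightarrow> Re ?L" using t by (rule tendsto_Re)
  hence "Re ?L \<ge> 0" 
    by (rule tendsto_lowerbound) (use nn in \<open>auto simp: less_eq_complex_def\<close>)
  moreover have "(\<lambda>N. Im (?Q N)) \<longlonglongrightarrow> Im ?L" using t by (rule tendsto_Im)
  hence "Im ?L = 0"
    using nn by (simp add: less_eq_complex_def LIMSEQ_const_iff)
  ultimately show "0 \<le> ?L" by (simp add: less_eq_complex_def)
qed

lemma filterlim_int_intervals:
  "filterlim (\<lambda>N::nat. {-int N..int N}) (finite_subsets_at_top (UNIV :: int set)) sequentially"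
  unfolding filterlim_finite_subsets_at_top
proof (safe, goal_cases)
  case (1 X)
  define M where "M = Max (abs ` insert 0 X)"
  have "\<And>x. x \<in> X \<Longrightarrow> \<bar>x\<bar> \<le> M" unfolding M_def using 1 by (intro Max_ge) auto
  hence n: "X \<subseteq> {-int (nat M)..int (nat M)}" by force
  have n': "\<And>y. y \<ge> nat M \<Longrightarrow> X \<subseteq> {-int y..int y}"
  proof -
    fix y assume "y \<ge> nat M"
    hence "{-int (nat M)..int (nat M)} \<subseteq> {-int y..int y}" by auto
    thus "X \<subseteq> {-int y..int y}" using n by blast
  qed
  show ?case using eventually_ge_at_top[of "nat M"]
    by eventually_elim (use n' in auto)
qed

lemma infsum_int_limit:
  fixes f :: "int \<Rightarrow> complex"
  assumes "f summable_on UNIV"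
  shows "(\<lambda>N::nat. \<Sum>n\<in>{-int N..int N}. f n) \<longlonglongrightarrow> infsum f UNIV"
proof -
  have "(sum f \<longlongrightarrow> infsum f UNIV) (finite_subsets_at_top UNIV)"
    using has_sum_infsum[OF assms] unfolding has_sum_def .
  from filterlim_compose[OF this filterlim_int_intervals] show ?thesis by (simp add: o_def)
qed


lemma r_bound:
  fixes q :: real and a b :: complex
  assumes "0 < q" "q * exp (4*pi*\<bar>Im a\<bar>) < 1" "q * exp (4*pi*\<bar>Im b\<bar>) < 1"
  shows "q * exp (2*pi*\<bar>Im (a - cnj b)\<bar>) < 1"
proof -
  have "\<bar>Im (a - cnj b)\<bar> \<le> \<bar>Im a\<bar> + \<bar>Im b\<bar>" by simp
  also have "\<dots> \<le> 2 * max \<bar>Im a\<bar> \<bar>Im b\<bar>" by simp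
  finally have h: "\<bar>Im (a - cnj b)\<bar> \<le> 2 * max \<bar>Im a\<bar> \<bar>Im b\<bar>" .
  have "2*pi*\<bar>Im (a - cnj b)\<bar> \<le> 2*pi*(2 * max \<bar>Im a\<bar> \<bar>Im b\<bar>)"
    using h pi_gt_zero by (intro mult_left_mono) auto
  hence "2*pi*\<bar>Im (a - cnj b)\<bar> \<le> 4*pi*max \<bar>Im a\<bar> \<bar>Im b\<bar>" by simp
  hence "q * exp (2*pi*\<bar>Im (a - cnj b)\<bar>) \<le> q * exp (4*pi*max \<bar>Im a\<bar> \<bar>Im b\<bar>)"
    using assms(1) by (intro mult_left_mono) auto
  also have "\<dots> < 1" using assms(2,3) by (cases "\<bar>Im a\<bar> \<le> \<bar>Im b\<bar>") (auto simp: max_def)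
  finally show ?thesis .
qed

lemma factor_approx:
  fixes q :: real and w :: "nat \<Rightarrow> complex"
  assumes q0: "0 < q" and q1: "q < 1" and wc: "\<And>j. j \<in> {1..n} \<Longrightarrow> q * exp (4*pi*\<bar>Im (w j)\<bar>) < 1"
  shows "\<exists>P. (\<forall>N. gram n (P N)) \<and> (\<forall>j\<in>{1..n}. \<forall>k\<in>{1..n}.
            (\<lambda>N. P N j k) \<longlonglongrightarrow> dn q (complex_of_real (2 * jacobiK q) * (w j - cnj (w k))))"
proof (cases "jacobiK q = 0")
  case True
  have "gram n (\<lambda>j k. 0)" by (rule gram_intro[where S="{}::nat set"]) auto
  moreover have "\<And>u. dn q u = 0" unfolding dn_def using True by simp
  ultimately show ?thesis by (intro exI[where x="\<lambda>N j k. 0"]) auto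
next
  case False
  define K where "K = jacobiK q"
  have K0: "K \<noteq> 0" using False K_def by simp
  have Kge: "K \<ge> 0" unfolding K_def jacobiK_def by simp
  define c where "c = pi / K"
  have c0: "c \<ge> 0" unfolding c_def using Kge by simp
  define wr where "wr n = q powi n / (1 + q powi (2*n))" for n :: int
  have wr0: "wr n \<ge> 0" for n unfolding wr_def using q0 by simp
  define f where "f n j = exp (2 * of_int n * complex_of_real pi * w j * \<i>)" for n :: int and j
  define P where "P N j k = complex_of_real c * (\<Sum>n\<in>{-int N..int N}. complex_of_real (wr n) * (f n j * cnj (f n k)))" for N j k
  have gr: "gram n (P N)" for N
  proof (rule gram_intro[where S="{-int N..int N}" and h="\<lambda>n j. complex_of_real (sqrt (c * wr n)) * f n j"])
    fix j k
    have hh: "\<And>n. complex_of_real (sqrt (c * wr n)) * f n j * cnj (complex_of_real (sqrt (c * wr n)) * f n k)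
        = complex_of_real c * (complex_of_real (wr n) * (f n j * cnj (f n k)))"
    proof -
      fix n
      have "complex_of_real (sqrt (c * wr n)) * cnj (complex_of_real (sqrt (c * wr n))) = complex_of_real (c * wr n)"
        using c0 wr0[of n] by (simp flip: of_real_mult)
      thus "complex_of_real (sqrt (c * wr n)) * f n j * cnj (complex_of_real (sqrt (c * wr n)) * f n k)
        = complex_of_real c * (complex_of_real (wr n) * (f n j * cnj (f n k)))"
        by (simp add: mult_ac)
    qed
    show "P N j k = (\<Sum>s\<in>{-int N..int N}. complex_of_real (sqrt (c * wr s)) * f s j * cnj (complex_of_real (sqrt (c * wr s)) * f s k))"
      unfolding P_def sum_distrib_left hh ..
  qed auto
  have lim: "(\<lambda>N. P N j k) \<longlonglongrightarrow> dn q (complex_of_real (2 * jacobiK q) * (w j - cnj (w k)))"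
    if j: "j \<in> {1..n}" and k: "k \<in> {1..n}" for j k
  proof -
    define x where "x = w j - cnj (w k)"
    have xx: "complex_of_real (2 * K) * x / complex_of_real (2 * K) = x" using K0 by simp
    have id2: "exp (2 * of_int n * complex_of_real pi * x * \<i>) = f n j * cnj (f n k)" for n
    proof -
      have "cnj (f n k) = exp (- (2 * of_int n * complex_of_real pi * cnj (w k) * \<i>))"
        unfolding f_def by (simp add: exp_cnj)
      hence "f n j * cnj (f n k) = exp (2 * of_int n * complex_of_real pi * w j * \<i> + - (2 * of_int n * complex_of_real pi * cnj (w k) * \<i>))"
        unfolding exp_add by (simp only: f_def)
      also have "2 * of_int n * complex_of_real pi * w j * \<i> + - (2 * of_int n * complex_of_real pi * cnj (w k) * \<i>) = 2 * of_int n * complex_of_real pi * x * \<i>"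
        unfolding x_def by (simp add: right_diff_distrib left_diff_distrib)
      finally show ?thesis by (rule sym)
    qed
    define r where "r = q * exp (2*pi*\<bar>Im x\<bar>)"
    have r1: "r < 1" unfolding r_def x_def using r_bound[OF q0 wc[OF j] wc[OF k]] .
    have r0: "r \<ge> 0" unfolding r_def using q0 by simp
    have gs: "(\<lambda>n::int. norm (r ^ nat \<bar>n\<bar>)) summable_on UNIV"
      using geom_int_summable[OF r0 r1] r0 by simp
    have bnd: "norm (complex_of_real (wr n) * (f n j * cnj (f n k))) \<le> norm (r ^ nat \<bar>n\<bar>)" for n
    proof -
      have "norm (complex_of_real (wr n) * (f n j * cnj (f n k))) \<le> r ^ nat \<bar>n\<bar>"
        using term_bound[OF q0 q1, of n x] unfolding id2 wr_def[symmetric] r_def[symmetric] .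
      thus ?thesis using r0 by simp
    qed
    have "(\<lambda>n. norm (complex_of_real (wr n) * (f n j * cnj (f n k)))) summable_on UNIV"
      using Infinite_Sum.abs_summable_on_comparison_test[where g="\<lambda>n::int. r ^ nat \<bar>n\<bar>" and A=UNIV
          and f="\<lambda>n. complex_of_real (wr n) * (f n j * cnj (f n k))", OF gs bnd] .
    hence summ: "(\<lambda>n. complex_of_real (wr n) * (f n j * cnj (f n k))) summable_on UNIV"
      by (rule abs_summable_summable)
    have "dn q (complex_of_real (2 * jacobiK q) * (w j - cnj (w k)))
        = complex_of_real c * infsum (\<lambda>n. complex_of_real (wr n) * (f n j * cnj (f n k))) UNIV"
      unfolding dn_def c_def K_def[symmetric] x_def[symmetric] wr_def[symmetric] xx id2 ..
    thus ?thesis unfolding P_def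
      by (simp only:) (intro tendsto_mult tendsto_const infsum_int_limit summ)
  qed
  show ?thesis using gr lim by blast
qed


theorem mainTheorem2:
  fixes m n :: nat and q :: "nat \<Rightarrow> real" and v :: "nat \<Rightarrow> nat \<Rightarrow> complex"
  assumes q_pos: "\<And>l. l \<in> {1..m} \<Longrightarrow> 0 < q l"
    and q_lt1: "\<And>l. l \<in> {1..m} \<Longrightarrow> q l < 1"
    and v_cond: "\<And>j l. j \<in> {1..n} \<Longrightarrow> l \<in> {1..m} \<Longrightarrow>
                   q l * exp (4 * pi * \<bar>Im (v j l)\<bar>) < 1"
  shows "psd_matrix n (\<lambda>j k. \<Prod>l\<in>{1..m}.
           dn (q l) (complex_of_real (2 * jacobiK (q l)) * (v j l - cnj (v k l))))"
proof -
  have "\<forall>l\<in>{1..m}. \<exists>P. (\<forall>N. gram n (P N)) \<and> (\<forall>j\<in>{1..n}. \<forall>k\<in>{1..n}.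
            (\<lambda>N. P N j k) \<longlonglongrightarrow> dn (q l) (complex_of_real (2 * jacobiK (q l)) * (v j l - cnj (v k l))))"
  proof
    fix l assume l: "l \<in> {1..m}"
    show "\<exists>P. (\<forall>N. gram n (P N)) \<and> (\<forall>j\<in>{1..n}. \<forall>k\<in>{1..n}.
            (\<lambda>N. P N j k) \<longlonglongrightarrow> dn (q l) (complex_of_real (2 * jacobiK (q l)) * (v j l - cnj (v k l))))"
      using factor_approx[of "q l" n "\<lambda>j. v j l"] q_pos[OF l] q_lt1[OF l] v_cond[OF _ l] by blast
  qed
  then obtain PP where PP: "\<And>l. l\<in>{1..m} \<Longrightarrow> (\<forall>N. gram n (PP l N)) \<and> (\<forall>j\<in>{1..n}. \<forall>k\<in>{1..n}.
            (\<lambda>N. PP l N j k) \<longlonglongrightarrow> dn (q l) (complex_of_real (2 * jacobiK (q l)) * (v j l - cnj (v k l))))"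
    by (metis bchoice)
  show ?thesis
  proof (rule psd_limit[where A="\<lambda>N j k. \<Prod>l\<in>{1..m}. PP l N j k"])
    fix N show "psd_matrix n (\<lambda>j k. \<Prod>l\<in>{1..m}. PP l N j k)"
      using PP by (intro gram_psd gram_prod) auto
  next
    fix j k assume "j \<in> {1..n}" "k \<in> {1..n}"
    thus "(\<lambda>N. \<Prod>l\<in>{1..m}. PP l N j k) \<longlonglongrightarrow> (\<Prod>l\<in>{1..m}. dn (q l) (complex_of_real (2 * jacobiK (q l)) * (v j l - cnj (v k l))))"
      using PP by (intro tendsto_prod) auto
  qed
qed

end
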